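(* Let $U$, the critical points $x_i$ ($i=1,\dots,k$, local minima) and $x_{i+1/2}$ (local maxima), the Peierls barrier $h$, and the right/left barriers $h_R,h_L$ be as in the context. Let $W_1,\dots,W_k$ be real numbers satisfying the discrete weak KAM problem $W_i=\min_{j=1,\dots,k}\{W_j+h(x_i;x_j)\}$ for all $i$, and define $W(x)=\min_{j=1,\dots,k}\{W_j+h(x;x_j)\}$ for $x\in\mathbb{S}^1$. Then for every $i=1,\dots,k$ and every $x\in[x_i,x_{i+1}]$ (lifted to $\mathbb{R}$, with $x_{k+1}=x_1+1$, $W_{k+1}=W_1$), $$W(x)=\min\{W_i+h_R(x;x_i),\ W_{i+1}+h_L(x;x_{i+1})\}.$$ Consequently, at each local maximum $x_{i+1/2}$ there is at most one flat connection (a point where $W$ passes between a branch of the form $U+\mathrm{const}$ and a constant branch), located either on the left of $x_{i+1/2}$ or on the right of $x_{i+1/2}$.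
   Context: $\mathbb{S}^1=\mathbb{R}/\mathbb{Z}$; $U:\mathbb{R}\to\mathbb{R}$ smooth, skew periodic ($U(x)=\tilde U(x)-\bar bx$, $\tilde U$ smooth 1-periodic), whose critical points in one period are exactly $k\ge1$ local minima $x_1,\dots,x_k$ interleaved with $k$ local maxima, $0=x_{1/2}<x_1<x_{3/2}<\dots<x_k<x_{k+1/2}=1$, and $x_{i+\ell k}=x_i+\ell$. $L(s,x)=\frac14(s+U'(x))^2$. Peierls barrier: $h(y;x)=\liminf_{T\to\infty}\inf\{\int_0^TL(\dot\gamma,\gamma)dt:\gamma:[0,T]\to\mathbb{S}^1$ absolutely continuous, $\gamma(0)=x,\gamma(T)=y\}$. Right barrier: for $y\in[x_i,x_{i+k}]$, $h_R(y;x_i)=\inf\{\int_0^TL(\dot\gamma,\gamma)dt:T\ge0,\gamma:[0,T]\to\mathbb{R}$ absolutely continuous, $\gamma(0)=x_i,\gamma(T)=y\}$; left barrier $h_L(y;x_i)$ for $y\in[x_{i-k},x_i]$ is given by the same formula. *)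

theory Defs
  imports "HOL-Analysis.Analysis"
begin

definition smooth_real :: "(real \<Rightarrow> real) \<Rightarrow> bool" where
  "smooth_real f \<longleftrightarrow> (\<forall>n x. ((deriv ^^ n) f) differentiable (at x))"

definition abs_cont_on :: "real set \<Rightarrow> (real \<Rightarrow> real) \<Rightarrow> bool" where
  "abs_cont_on S f \<longleftrightarrow>
     (\<forall>\<epsilon>>0. \<exists>\<delta>>0. \<forall>(n::nat) (a::nat \<Rightarrow> real) b.
        (\<forall>i<n. a i \<le> b i \<and> {a i..b i} \<subseteq> S) \<and>
        (\<forall>i<n. \<forall>j<n. i \<noteq> j \<longrightarrow> b i \<le> a j \<or> b j \<le> a i) \<and>
        (\<Sum>i<n. b i - a i) < \<delta>
        \<longrightarrow> (\<Sum>i<n. \<bar>f (b i) - f (a i)\<bar>) < \<epsilon>)"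

definition loc_min :: "(real \<Rightarrow> real) \<Rightarrow> real \<Rightarrow> bool" where
  "loc_min f x \<longleftrightarrow> (\<exists>e>0. \<forall>y. \<bar>y - x\<bar> < e \<longrightarrow> f x \<le> f y)"

definition loc_max :: "(real \<Rightarrow> real) \<Rightarrow> real \<Rightarrow> bool" where
  "loc_max f x \<longleftrightarrow> (\<exists>e>0. \<forall>y. \<bar>y - x\<bar> < e \<longrightarrow> f y \<le> f x)"

definition lagr :: "(real \<Rightarrow> real) \<Rightarrow> real \<Rightarrow> real \<Rightarrow> real" where
  "lagr U s x = (s + deriv U x)^2 / 4"

definition admissible :: "(real \<Rightarrow> real) \<Rightarrow> real \<Rightarrow> (real \<Rightarrow> real) \<Rightarrow> bool" where
  "admissible U T \<gamma> \<longleftrightarrow> T \<ge> 0 \<and> abs_cont_on {0..T} \<gamma> \<and>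
     (\<lambda>t. lagr U (vector_derivative \<gamma> (at t)) (\<gamma> t)) integrable_on {0..T}"

definition action :: "(real \<Rightarrow> real) \<Rightarrow> real \<Rightarrow> (real \<Rightarrow> real) \<Rightarrow> real" where
  "action U T \<gamma> = integral {0..T} (\<lambda>t. lagr U (vector_derivative \<gamma> (at t)) (\<gamma> t))"

text \<open>Minimal action over time exactly T between x and y on the circle R/Z:
  curves on S^1 are represented by their lifts to R, which start at the lift x
  and end at some lift y + m (m integer) of y.\<close>
definition circ_min_action :: "(real \<Rightarrow> real) \<Rightarrow> real \<Rightarrow> real \<Rightarrow> real \<Rightarrow> real" where
  "circ_min_action U T y x =
     Inf {action U T \<gamma> | \<gamma>. admissible U T \<gamma> \<and> \<gamma> 0 = x \<and> (\<exists>m::int. \<gamma> T = y + of_int m)}"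

definition peierls :: "(real \<Rightarrow> real) \<Rightarrow> real \<Rightarrow> real \<Rightarrow> ereal" where
  "peierls U y x = Liminf at_top (\<lambda>T. ereal (circ_min_action U T y x))"

text \<open>Right/left barrier h_R(y;x), h_L(y;x): infimum of the action over all times
  T \<ge> 0 and curves in R from x to y (same formula for both; they differ only in
  the range of y where they are used).\<close>
definition line_barrier :: "(real \<Rightarrow> real) \<Rightarrow> real \<Rightarrow> real \<Rightarrow> real" where
  "line_barrier U y x =
     Inf {action U T \<gamma> | T \<gamma>. admissible U T \<gamma> \<and> \<gamma> 0 = x \<and> \<gamma> T = y}"

abbreviation hR :: "(real \<Rightarrow> real) \<Rightarrow> real \<Rightarrow> real \<Rightarrow> real" where
  "hR \<equiv> line_barrier"

abbreviation hL :: "(real \<Rightarrow> real) \<Rightarrow> real \<Rightarrow> real \<Rightarrow> real" where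
  "hL \<equiv> line_barrier"

text \<open>Standing assumptions on U and its critical points: xm i = x_i (local minima),
  xM i = x_{i+1/2} (local maxima), for integer i.\<close>
definition skew_periodic_setting ::
  "(real \<Rightarrow> real) \<Rightarrow> nat \<Rightarrow> (int \<Rightarrow> real) \<Rightarrow> (int \<Rightarrow> real) \<Rightarrow> bool" where
  "skew_periodic_setting U k xm xM \<longleftrightarrow>
     k \<ge> 1 \<and> smooth_real U \<and>
     (\<exists>Ut b. smooth_real Ut \<and> (\<forall>x. Ut (x + 1) = Ut x) \<and> (\<forall>x. U x = Ut x - b * x)) \<and>
     xM 0 = 0 \<and>
     (\<forall>i. xM (i - 1) < xm i \<and> xm i < xM i) \<and>
     (\<forall>i. xm (i + int k) = xm i + 1 \<and> xM (i + int k) = xM i + 1) \<and>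
     (\<forall>i. loc_min U (xm i) \<and> loc_max U (xM i)) \<and>
     (\<forall>x. deriv U x = 0 \<longleftrightarrow> (\<exists>i. x = xm i \<or> x = xM i))"

end

theory Submission
  imports Defs
begin

lemma ac_subset:
  assumes ac: "abs_cont_on S f" and sub: "T \<subseteq> S"
  shows "abs_cont_on T f"
  unfolding abs_cont_on_def
proof (intro allI impI)
  fix e :: real assume e: "e > 0"
  obtain d where d: "d > 0" and H0: "\<forall>n a b. (\<forall>i<n. a i \<le> b i \<and> {a i..b i} \<subseteq> S) \<and>
        (\<forall>i<n. \<forall>j<n. i \<noteq> j \<longrightarrow> b i \<le> a j \<or> b j \<le> a i) \<and>
        (\<Sum>i<(n::nat). b i - a i) < d \<longrightarrow> (\<Sum>i<n. \<bar>f (b i) - f (a i)\<bar>) < e"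
    using ac[unfolded abs_cont_on_def, rule_format, OF e] by blast
  note H = H0[rule_format]
  show "\<exists>d>0. \<forall>n a b. (\<forall>i<n. a i \<le> b i \<and> {a i..b i} \<subseteq> T) \<and>
        (\<forall>i<n. \<forall>j<n. i \<noteq> j \<longrightarrow> b i \<le> a j \<or> b j \<le> a i) \<and>
        (\<Sum>i<(n::nat). b i - a i) < d \<longrightarrow> (\<Sum>i<n. \<bar>f (b i) - f (a i)\<bar>) < e"
  proof (intro exI[of _ d] conjI allI impI d)
    fix n :: nat and a b :: "nat \<Rightarrow> real"
    assume A: "(\<forall>i<n. a i \<le> b i \<and> {a i..b i} \<subseteq> T) \<and>
        (\<forall>i<n. \<forall>j<n. i \<noteq> j \<longrightarrow> b i \<le> a j \<or> b j \<le> a i) \<and> (\<Sum>i<n. b i - a i) < d"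
    have 1: "\<forall>i<n. a i \<le> b i \<and> {a i..b i} \<subseteq> S"
    proof (intro allI impI)
      fix i assume "i < n"
      then have "a i \<le> b i \<and> {a i..b i} \<subseteq> T" using A by simp
      then show "a i \<le> b i \<and> {a i..b i} \<subseteq> S" using sub by (meson order_trans)
    qed
    have 2: "\<forall>i<n. \<forall>j<n. i \<noteq> j \<longrightarrow> b i \<le> a j \<or> b j \<le> a i" using A by (rule conjunct1[OF conjunct2])
    have 3: "(\<Sum>i<n. b i - a i) < d" using A by (rule conjunct2[OF conjunct2])
    show "(\<Sum>i<n. \<bar>f (b i) - f (a i)\<bar>) < e"
      by (rule H) (rule conjI[OF 1 conjI[OF 2 3]])
  qed
qed

lemma ac_add_const: "abs_cont_on S f \<Longrightarrow> abs_cont_on S (\<lambda>t. f t + c)"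
  unfolding abs_cont_on_def by simp

lemma ac_comp:
  assumes ac: "abs_cont_on {p..q} g"
    and mono: "\<And>x y. x \<le> y \<Longrightarrow> \<phi> x \<le> \<phi> y"
    and lip: "\<And>x y. x \<le> y \<Longrightarrow> \<phi> y - \<phi> x \<le> y - x"
    and img: "\<And>x. x \<in> S \<Longrightarrow> \<phi> x \<in> {p..q}"
  shows "abs_cont_on S (\<lambda>t. g (\<phi> t))"
  unfolding abs_cont_on_def
proof (intro allI impI)
  fix e :: real assume "e > 0"
  then obtain d where d: "d > 0" and H0: "\<forall>n a b. (\<forall>i<n. a i \<le> b i \<and> {a i..b i} \<subseteq> {p..q}) \<and>
        (\<forall>i<n. \<forall>j<n. i \<noteq> j \<longrightarrow> b i \<le> a j \<or> b j \<le> a i) \<and>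
        (\<Sum>i<(n::nat). b i - a i) < d \<longrightarrow> (\<Sum>i<n. \<bar>g (b i) - g (a i)\<bar>) < e"
    using ac[unfolded abs_cont_on_def, rule_format, of e] by blast
  note H = H0[rule_format]
  show "\<exists>d>0. \<forall>n a b. (\<forall>i<n. a i \<le> b i \<and> {a i..b i} \<subseteq> S) \<and>
        (\<forall>i<n. \<forall>j<n. i \<noteq> j \<longrightarrow> b i \<le> a j \<or> b j \<le> a i) \<and>
        (\<Sum>i<(n::nat). b i - a i) < d \<longrightarrow> (\<Sum>i<n. \<bar>g (\<phi> (b i)) - g (\<phi> (a i))\<bar>) < e"
  proof (intro exI[of _ d] conjI allI impI d)
    fix n :: nat and a b :: "nat \<Rightarrow> real"
    assume A: "(\<forall>i<n. a i \<le> b i \<and> {a i..b i} \<subseteq> S) \<and>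
        (\<forall>i<n. \<forall>j<n. i \<noteq> j \<longrightarrow> b i \<le> a j \<or> b j \<le> a i) \<and> (\<Sum>i<n. b i - a i) < d"
    have 1: "\<forall>i<n. \<phi> (a i) \<le> \<phi> (b i) \<and> {\<phi> (a i)..\<phi> (b i)} \<subseteq> {p..q}"
    proof (intro allI impI conjI)
      fix i assume "i < n"
      then have ab: "a i \<le> b i" "{a i..b i} \<subseteq> S" using A by auto
      then have "a i \<in> S" "b i \<in> S" "a i \<le> b i" by auto
      then show "\<phi> (a i) \<le> \<phi> (b i)" by (intro mono) simp
      have "\<phi> (a i) \<in> {p..q}" "\<phi> (b i) \<in> {p..q}" using img \<open>a i \<in> S\<close> \<open>b i \<in> S\<close> by blast+
      then show "{\<phi> (a i)..\<phi> (b i)} \<subseteq> {p..q}" by auto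
    qed
    have 2: "\<forall>i<n. \<forall>j<n. i \<noteq> j \<longrightarrow> \<phi> (b i) \<le> \<phi> (a j) \<or> \<phi> (b j) \<le> \<phi> (a i)"
    proof (intro allI impI)
      fix i j assume "i < n" "j < n" "i \<noteq> j"
      then have "b i \<le> a j \<or> b j \<le> a i" using A by simp
      then show "\<phi> (b i) \<le> \<phi> (a j) \<or> \<phi> (b j) \<le> \<phi> (a i)"
        by (elim disjE) (simp_all add: mono)
    qed
    have "(\<Sum>i<n. \<phi> (b i) - \<phi> (a i)) \<le> (\<Sum>i<n. b i - a i)"
      by (rule sum_mono) (use A lip in auto)
    then have 3: "(\<Sum>i<n. \<phi> (b i) - \<phi> (a i)) < d" using A by linarith
    show "(\<Sum>i<n. \<bar>g (\<phi> (b i)) - g (\<phi> (a i))\<bar>) < e"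
      by (rule H[of n "\<lambda>i. \<phi> (a i)" "\<lambda>i. \<phi> (b i)"]) (rule conjI[OF 1 conjI[OF 2 3]])
  qed
qed

lemma ac_cont:
  assumes "abs_cont_on {p..q} g" shows "continuous_on {p..q} g"
  unfolding continuous_on_iff
proof (intro ballI allI impI)
  fix x e assume x: "x \<in> {p..q}" and e: "(0::real) < e"
  obtain d where d: "d > 0" and H0: "\<forall>n a b. (\<forall>i<n. a i \<le> b i \<and> {a i..b i} \<subseteq> {p..q}) \<and>
        (\<forall>i<n. \<forall>j<n. i \<noteq> j \<longrightarrow> b i \<le> a j \<or> b j \<le> a i) \<and>
        (\<Sum>i<(n::nat). b i - a i) < d \<longrightarrow> (\<Sum>i<n. \<bar>g (b i) - g (a i)\<bar>) < e"
    using assms[unfolded abs_cont_on_def, rule_format, OF e] by blast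
  note H = H0[rule_format]
  show "\<exists>d>0. \<forall>x'\<in>{p..q}. dist x' x < d \<longrightarrow> dist (g x') (g x) < e"
  proof (intro exI[of _ d] conjI ballI impI d)
    fix y assume y: "y \<in> {p..q}" and dy: "dist y x < d"
    have "(\<Sum>i<Suc 0. \<bar>g ((\<lambda>_. max x y) i) - g ((\<lambda>_. min x y) i)\<bar>) < e"
      by (rule H) (use x y dy in \<open>auto simp: dist_real_def\<close>)
    then show "dist (g y) (g x) < e"
      by (auto simp: dist_real_def max_def min_def abs_minus_commute split: if_splits)
  qed
qed

lemma ac_linear:
  "abs_cont_on S (\<lambda>t. x0 + v * t)"
  unfolding abs_cont_on_def
proof (intro allI impI)
  fix e :: real assume e: "e > 0"
  show "\<exists>d>0. \<forall>n a b. (\<forall>i<n. a i \<le> b i \<and> {a i..b i} \<subseteq> S) \<and>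
        (\<forall>i<n. \<forall>j<n. i \<noteq> j \<longrightarrow> b i \<le> a j \<or> b j \<le> a i) \<and>
        (\<Sum>i<(n::nat). b i - a i) < d \<longrightarrow> (\<Sum>i<n. \<bar>x0 + v * b i - (x0 + v * a i)\<bar>) < e"
  proof (intro exI[of _ "e / (\<bar>v\<bar> + 1)"] conjI allI impI)
    show "e / (\<bar>v\<bar> + 1) > 0" using e by simp
    fix n :: nat and a b :: "nat \<Rightarrow> real"
    assume A: "(\<forall>i<n. a i \<le> b i \<and> {a i..b i} \<subseteq> S) \<and>
        (\<forall>i<n. \<forall>j<n. i \<noteq> j \<longrightarrow> b i \<le> a j \<or> b j \<le> a i) \<and> (\<Sum>i<n. b i - a i) < e / (\<bar>v\<bar> + 1)"
    have "(\<Sum>i<n. \<bar>x0 + v * b i - (x0 + v * a i)\<bar>) = (\<Sum>i<n. \<bar>v\<bar> * (b i - a i))"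
      by (rule sum.cong) (use A in \<open>auto simp: abs_mult right_diff_distrib[symmetric]\<close>)
    also have "\<dots> = \<bar>v\<bar> * (\<Sum>i<n. b i - a i)" by (simp add: sum_distrib_left)
    also have "\<dots> \<le> (\<bar>v\<bar> + 1) * (\<Sum>i<n. b i - a i)"
      by (rule mult_right_mono) (use A in \<open>auto intro: sum_nonneg\<close>)
    also have "\<dots> < (\<bar>v\<bar> + 1) * (e / (\<bar>v\<bar> + 1))"
      by (rule mult_strict_left_mono) (use A in auto)
    also have "\<dots> = e" by simp
    finally show "(\<Sum>i<n. \<bar>x0 + v * b i - (x0 + v * a i)\<bar>) < e" .
  qed
qed

lemma vd_shift: "vector_derivative (\<lambda>t. (\<gamma>::real\<Rightarrow>real) (t + s)) (at t) = vector_derivative \<gamma> (at (t + s))"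
proof -
  have "\<And>D. ((\<lambda>t. \<gamma> (t + s)) has_vector_derivative D) (at t) \<longleftrightarrow> (\<gamma> has_vector_derivative D) (at (t + s))"
    by (simp add: has_real_derivative_iff_has_vector_derivative[symmetric] DERIV_shift)
  then show ?thesis unfolding vector_derivative_def by simp
qed

lemma vd_local:
  assumes "eventually (\<lambda>x. (f::real\<Rightarrow>real) x = g x) (nhds t)"
  shows "vector_derivative f (at t) = vector_derivative g (at t)"
proof -
  have "\<And>D. (f has_vector_derivative D) (at t) \<longleftrightarrow> (g has_vector_derivative D) (at t)"
    using DERIV_cong_ev[OF refl assms refl]
    by (simp add: has_real_derivative_iff_has_vector_derivative[symmetric])
  then show ?thesis unfolding vector_derivative_def by simp
qed

context
  fixes U :: "real \<Rightarrow> real" and k :: nat and xm xM :: "int \<Rightarrow> real"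
  assumes S: "skew_periodic_setting U k xm xM"
begin

lemma SP1: "k \<ge> 1"
  using S unfolding skew_periodic_setting_def by (elim conjE) assumption

lemma SP2: "smooth_real U"
  using S unfolding skew_periodic_setting_def by (elim conjE) assumption

lemma SP3: "\<exists>Ut b. smooth_real Ut \<and> (\<forall>x. Ut (x + 1) = Ut x) \<and> (\<forall>x. U x = Ut x - b * x)"
  using S unfolding skew_periodic_setting_def by (elim conjE) assumption

lemma SP4: "\<forall>i. xM (i - 1) < xm i \<and> xm i < xM i"
  using S unfolding skew_periodic_setting_def by (elim conjE) assumption

lemma SP5: "\<forall>i. xm (i + int k) = xm i + 1 \<and> xM (i + int k) = xM i + 1"
  using S unfolding skew_periodic_setting_def by (elim conjE) assumption

lemma SP6: "\<forall>x. deriv U x = 0 \<longleftrightarrow> (\<exists>i. x = xm i \<or> x = xM i)"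
  using S unfolding skew_periodic_setting_def by (elim conjE) assumption

lemma U_diff: "U differentiable (at x)"
proof -
  have "(deriv ^^ 0) U differentiable (at x)" using SP2 unfolding smooth_real_def by blast
  then show ?thesis by simp
qed

lemma dU_diff: "deriv U differentiable (at x)"
proof -
  have "(deriv ^^ Suc 0) U differentiable (at x)" using SP2 unfolding smooth_real_def by blast
  then show ?thesis by simp
qed

lemma dU_cont: "continuous_on A (deriv U)"
  by (rule continuous_at_imp_continuous_on) (auto intro: differentiable_imp_continuous_within dU_diff)

lemma U_shift1: "U (x + 1) = U x + (U 1 - U 0)"
proof -
  obtain Ut b where Ut: "\<forall>x. Ut (x + 1) = Ut x" "\<forall>x. U x = Ut x - b * x"
    using SP3 by blast
  have "Ut 1 = Ut 0" using Ut(1)[rule_format, of 0] by simp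
  moreover have "U (x+1) = Ut (x+1) - b*(x+1)" "U x = Ut x - b*x" "U 1 = Ut 1 - b*1" "U 0 = Ut 0 - b * 0"
    using Ut(2) by blast+
  moreover have "b*(x+1) = b*x + b" by (simp add: algebra_simps)
  moreover have "Ut (x+1) = Ut x" using Ut(1) by blast
  ultimately show ?thesis by linarith
qed

lemma dU_per1: "deriv U (x + 1) = deriv U x"
proof -
  have d1: "(U has_real_derivative deriv U (x + 1)) (at (x + 1))"
    using U_diff by (simp add: DERIV_deriv_iff_real_differentiable)
  then have "((\<lambda>y. U (y + 1)) has_real_derivative deriv U (x + 1)) (at x)"
    by (rule DERIV_shift[THEN iffD1])
  moreover have "(\<lambda>y. U (y + 1)) = (\<lambda>y. U y + (U 1 - U 0))"
    using U_shift1 by auto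
  ultimately have "((\<lambda>y. U y + (U 1 - U 0)) has_real_derivative deriv U (x + 1)) (at x)" by simp
  moreover have "((\<lambda>y. U y + (U 1 - U 0)) has_real_derivative deriv U x) (at x)"
  proof -
    have d0: "(U has_real_derivative deriv U x) (at x)"
      using U_diff by (simp add: DERIV_deriv_iff_real_differentiable)
    have "((\<lambda>y. U y + (U 1 - U 0)) has_real_derivative deriv U x + 0) (at x)"
      by (rule DERIV_add[OF d0 DERIV_const])
    then show ?thesis by simp
  qed
  ultimately show ?thesis by (rule DERIV_unique)
qed

lemma dU_per_nat: "deriv U (x + real n) = deriv U x"
proof (induction n arbitrary: x)
  case 0 then show ?case by simp
next
  case (Suc n)
  have "deriv U (x + real (Suc n)) = deriv U ((x + real n) + 1)" by (simp add: algebra_simps)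
  also have "\<dots> = deriv U (x + real n)" by (rule dU_per1)
  finally show ?case using Suc by simp
qed

lemma dU_per: "deriv U (x + of_int m) = deriv U x"
proof (cases "m \<ge> 0")
  case True
  then have "deriv U (x + of_int m) = deriv U (x + real (nat m))" by simp
  also have "\<dots> = deriv U x" by (rule dU_per_nat)
  finally show ?thesis .
next
  case False
  then have "deriv U x = deriv U ((x + of_int m) + real (nat (-m)))" by simp
  also have "\<dots> = deriv U (x + of_int m)" by (rule dU_per_nat)
  finally show ?thesis by simp
qed

lemma xm_crit: "deriv U (xm p) = 0"
  by (rule SP6[rule_format, THEN iffD2]) blast

lemma xm_crit': "deriv U (xm p + of_int n) = 0"
  using dU_per xm_crit by simp

lemma xm_step: "xm p < xm (p + 1)"
proof -
  have "xm p < xM p" "xM ((p + 1) - 1) < xm (p + 1)"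
    using SP4 by blast+
  then show ?thesis by simp
qed

lemma xm_mono_nat: "xm p < xm (p + 1 + int n)"
proof (induction n)
  case 0 then show ?case using xm_step by simp
next
  case (Suc n)
  have "xm (p + 1 + int n) < xm (p + 1 + int n + 1)" by (rule xm_step)
  then show ?case using Suc by (simp add: add_ac)
qed

lemma xm_mono: "p < q \<Longrightarrow> xm p < xm q"
  using xm_mono_nat[of p "nat (q - p - 1)"] by simp

lemma xm_k: "xm (p + int k) = xm p + 1"
  using SP5 by blast

lemma xm_per_nat: "xm (p + int n * int k) = xm p + real n"
proof (induction n arbitrary: p)
  case 0 then show ?case by simp
next
  case (Suc n)
  have "xm (p + int (Suc n) * int k) = xm ((p + int n * int k) + int k)" by (simp add: algebra_simps)
  also have "\<dots> = xm (p + int n * int k) + 1" by (rule xm_k)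
  finally show ?case using Suc by simp
qed

lemma xm_per: "xm (p + n * int k) = xm p + of_int n"
proof (cases "n \<ge> 0")
  case True
  then have "xm (p + n * int k) = xm (p + int (nat n) * int k)" by simp
  also have "\<dots> = xm p + real (nat n)" by (rule xm_per_nat)
  finally show ?thesis using True by simp
next
  case False
  then have "xm p = xm ((p + n * int k) + int (nat (-n)) * int k)" by (simp add: algebra_simps)
  also have "\<dots> = xm (p + n * int k) + real (nat (-n))" by (rule xm_per_nat)
  finally show ?thesis using False by simp
qed

end

definition Lg :: "(real \<Rightarrow> real) \<Rightarrow> (real \<Rightarrow> real) \<Rightarrow> real \<Rightarrow> real" where
  "Lg U \<gamma> t = lagr U (vector_derivative \<gamma> (at t)) (\<gamma> t)"

lemma action_Lg: "action U T \<gamma> = integral {0..T} (Lg U \<gamma>)"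
  unfolding action_def Lg_def by simp

lemma admissible_Lg: "admissible U T \<gamma> \<longleftrightarrow> T \<ge> 0 \<and> abs_cont_on {0..T} \<gamma> \<and> Lg U \<gamma> integrable_on {0..T}"
  unfolding admissible_def Lg_def by simp

lemma lagr_nonneg: "lagr U s x \<ge> 0"
  unfolding lagr_def by simp

lemma action_nonneg: "admissible U T \<gamma> \<Longrightarrow> action U T \<gamma> \<ge> 0"
  unfolding admissible_Lg action_Lg
  by (intro integral_nonneg) (auto simp: Lg_def lagr_nonneg)

lemma adm_split:
  assumes adm: "admissible U T \<gamma>" and s: "0 \<le> s" "s \<le> T"
  shows "admissible U s \<gamma> \<and> admissible U (T - s) (\<lambda>t. \<gamma> (t + s)) \<and>
         action U T \<gamma> = action U s \<gamma> + action U (T - s) (\<lambda>t. \<gamma> (t + s))"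
proof -
  have ac: "abs_cont_on {0..T} \<gamma>" and int: "Lg U \<gamma> integrable_on {0..T}"
    using adm unfolding admissible_Lg by auto
  have ac1: "abs_cont_on {0..s} \<gamma>" using ac_subset[OF ac] s by auto
  have ac2: "abs_cont_on {0..T - s} (\<lambda>t. \<gamma> (t + s))"
    by (rule ac_comp[OF ac, of "\<lambda>t. t + s"]) (use s in auto)
  have int1: "Lg U \<gamma> integrable_on {0..s}"
    by (rule integrable_subinterval_real[OF int]) (use s in auto)
  have Leq: "Lg U (\<lambda>t. \<gamma> (t + s)) = Lg U \<gamma> \<circ> ((+) s)"
    by (auto simp: Lg_def vd_shift add.commute)
  have int3: "Lg U \<gamma> integrable_on {s..T}"
    by (rule integrable_subinterval_real[OF int]) (use s in auto)
  have int2: "Lg U (\<lambda>t. \<gamma> (t + s)) integrable_on {0..T - s}"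
    unfolding Leq integrable_on_shift_Icc_real using int3 by simp
  have "integral {0..T - s} (Lg U (\<lambda>t. \<gamma> (t + s))) = integral {s..T} (Lg U \<gamma>)"
    unfolding Leq integral_shift_Icc_real by simp
  moreover have "integral {0..s} (Lg U \<gamma>) + integral {s..T} (Lg U \<gamma>) = integral {0..T} (Lg U \<gamma>)"
    by (rule Henstock_Kurzweil_Integration.integral_combine) (use s int in auto)
  ultimately show ?thesis
    using ac1 ac2 int1 int2 s unfolding admissible_Lg action_Lg by auto
qed

lemma adm_wait:
  assumes adm: "admissible U T \<gamma>" and crit: "deriv U (\<gamma> 0) = 0" and tau: "\<tau> \<ge> 0"
  shows "admissible U (T + \<tau>) (\<lambda>t. \<gamma> (max (t - \<tau>) 0)) \<and>
         action U (T + \<tau>) (\<lambda>t. \<gamma> (max (t - \<tau>) 0)) = action U T \<gamma>"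
proof -
  define \<delta> where "\<delta> = (\<lambda>t. \<gamma> (max (t - \<tau>) 0))"
  have ac: "abs_cont_on {0..T} \<gamma>" and int: "(Lg U \<gamma> has_integral action U T \<gamma>) {0..T}"
    and T: "T \<ge> 0"
    using adm unfolding admissible_Lg action_Lg by auto
  have acd: "abs_cont_on {0..T + \<tau>} \<delta>"
    unfolding \<delta>_def
    by (rule ac_comp[OF ac, of "\<lambda>t. max (t - \<tau>) 0"]) (use tau T in auto)
  define g where "g = (\<lambda>t. if t \<le> \<tau> then 0 else Lg U \<gamma> (t - \<tau>))"
  have gd: "Lg U \<delta> t = g t" if "t \<noteq> \<tau>" for t
  proof (cases "t < \<tau>")
    case True
    have "eventually (\<lambda>x. x < \<tau>) (nhds t)" using True eventually_nhds_in_open[of "{..<\<tau>}" t] by auto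
    then have "eventually (\<lambda>x. \<delta> x = (\<lambda>_. \<gamma> 0) x) (nhds t)"
      by eventually_elim (auto simp: \<delta>_def)
    then have "vector_derivative \<delta> (at t) = 0" using vd_local by fastforce
    moreover have "\<delta> t = \<gamma> 0" using True by (simp add: \<delta>_def)
    ultimately show ?thesis using True crit by (simp add: Lg_def g_def lagr_def)
  next
    case False
    then have tt: "t > \<tau>" using that by simp
    have "eventually (\<lambda>x. x > \<tau>) (nhds t)" using tt eventually_nhds_in_open[of "{\<tau><..}" t] by auto
    then have "eventually (\<lambda>x. \<delta> x = (\<lambda>x. \<gamma> (x + (- \<tau>))) x) (nhds t)"
      by eventually_elim (auto simp: \<delta>_def)
    then have "vector_derivative \<delta> (at t) = vector_derivative (\<lambda>x. \<gamma> (x + (- \<tau>))) (at t)"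
      by (rule vd_local)
    also have "\<dots> = vector_derivative \<gamma> (at (t - \<tau>))" using vd_shift[of \<gamma> "- \<tau>" t] by simp
    finally have "vector_derivative \<delta> (at t) = vector_derivative \<gamma> (at (t - \<tau>))" .
    moreover have "\<delta> t = \<gamma> (t - \<tau>)" using tt by (simp add: \<delta>_def)
    ultimately show ?thesis using tt by (simp add: Lg_def g_def)
  qed
  have z: "((\<lambda>_. 0::real) has_integral 0) {0..\<tau>}" by simp
  have g1: "(g has_integral 0) {0..\<tau>}"
    by (rule has_integral_eq[OF _ z]) (auto simp: g_def)
  have sh: "((Lg U \<gamma> \<circ> (+) (- \<tau>)) has_integral action U T \<gamma>) {\<tau>..T + \<tau>}"
    unfolding has_integral_shift_Icc_real using int by simp
  have g2: "(g has_integral action U T \<gamma>) {\<tau>..T + \<tau>}"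
    by (rule has_integral_spike[OF negligible_sing[of \<tau>] _ sh]) (auto simp: g_def)
  have gc: "(g has_integral 0 + action U T \<gamma>) {0..T + \<tau>}"
    by (rule has_integral_combine[OF _ _ g1 g2]) (use tau T in auto)
  have "(Lg U \<delta> has_integral action U T \<gamma>) {0..T + \<tau>}"
    by (rule has_integral_spike[OF negligible_sing[of \<tau>] _ gc[simplified]]) (auto simp: gd)
  then show ?thesis
    unfolding \<delta>_def[symmetric] admissible_Lg action_Lg
    using acd T tau by (auto simp: integral_unique has_integral_integrable)
qed

lemma vd_add_const: "vector_derivative (\<lambda>t. (\<gamma>::real\<Rightarrow>real) t + c) (at t) = vector_derivative \<gamma> (at t)"
proof -
  have "\<And>D. ((\<lambda>t. \<gamma> t + c) has_real_derivative D) (at t) \<longleftrightarrow> (\<gamma> has_real_derivative D) (at t)"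
  proof
    fix D assume "((\<lambda>t. \<gamma> t + c) has_real_derivative D) (at t)"
    then have "((\<lambda>t. (\<gamma> t + c) - c) has_real_derivative D - 0) (at t)"
      by (intro DERIV_diff) auto
    then show "(\<gamma> has_real_derivative D) (at t)" by simp
  next
    fix D assume "(\<gamma> has_real_derivative D) (at t)"
    then have "((\<lambda>t. \<gamma> t + c) has_real_derivative D + 0) (at t)"
      by (intro DERIV_add) auto
    then show "((\<lambda>t. \<gamma> t + c) has_real_derivative D) (at t)" by simp
  qed
  then show ?thesis unfolding vector_derivative_def
    by (simp add: has_real_derivative_iff_has_vector_derivative)
qed

context
  fixes U :: "real \<Rightarrow> real" and k :: nat and xm xM :: "int \<Rightarrow> real"
  assumes S: "skew_periodic_setting U k xm xM"
begin

lemma adm_vshift: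
  assumes adm: "admissible U T \<gamma>"
  shows "admissible U T (\<lambda>t. \<gamma> t + of_int n) \<and> action U T (\<lambda>t. \<gamma> t + of_int n) = action U T \<gamma>"
proof -
  have "Lg U (\<lambda>t. \<gamma> t + of_int n) = Lg U \<gamma>"
    by (auto simp: Lg_def vd_add_const lagr_def dU_per[OF S])
  then show ?thesis using adm ac_add_const unfolding admissible_Lg action_Lg by auto
qed

lemma adm_linear:
  assumes T: "T > 0"
  shows "admissible U T (\<lambda>t. x0 + ((y - x0) / T) * t)"
proof -
  define v where "v = (y - x0) / T"
  have vd: "vector_derivative (\<lambda>t. x0 + v * t) (at t) = v" for t
  proof -
    have "((\<lambda>t. x0 + v * t) has_real_derivative v) (at t)"
      by (auto intro!: derivative_eq_intros)
    then show ?thesis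
      by (intro vector_derivative_at) (simp add: has_real_derivative_iff_has_vector_derivative)
  qed
  have "continuous_on {0..T} (\<lambda>t. (v + deriv U (x0 + v * t))^2 / 4)"
    by (intro continuous_intros continuous_on_compose2[OF dU_cont[OF S, of UNIV]]) auto
  then have "(\<lambda>t. (v + deriv U (x0 + v * t))^2 / 4) integrable_on {0..T}"
    by (rule integrable_continuous_interval)
  moreover have "Lg U (\<lambda>t. x0 + v * t) = (\<lambda>t. (v + deriv U (x0 + v * t))^2 / 4)"
    by (auto simp: Lg_def vd lagr_def)
  ultimately show ?thesis
    unfolding v_def[symmetric] admissible_Lg using T ac_linear by auto
qed

end

lemma circ_mem: "admissible U T \<gamma> \<Longrightarrow> \<gamma> 0 = x \<Longrightarrow> \<gamma> T = y + of_int m \<Longrightarrow>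
  action U T \<gamma> \<in> {action U T \<gamma> | \<gamma>. admissible U T \<gamma> \<and> \<gamma> 0 = x \<and> (\<exists>m::int. \<gamma> T = y + of_int m)}"
  apply (rule CollectI)
  apply (rule exI[of _ \<gamma>])
  by auto

lemma circ_le:
  assumes adm: "admissible U s \<gamma>" and g0: "\<gamma> 0 = x0" and crit: "deriv U x0 = 0"
    and gs: "\<gamma> s = y + of_int m" and T: "T \<ge> s"
  shows "circ_min_action U T y x0 \<le> action U s \<gamma>"
proof -
  have s0: "s \<ge> 0" using adm unfolding admissible_def by simp
  define \<tau> where "\<tau> = T - s"
  have tau: "\<tau> \<ge> 0" using T by (simp add: \<tau>_def)
  have W: "admissible U (s + \<tau>) (\<lambda>t. \<gamma> (max (t - \<tau>) 0)) \<and>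
         action U (s + \<tau>) (\<lambda>t. \<gamma> (max (t - \<tau>) 0)) = action U s \<gamma>"
    by (rule adm_wait[OF adm _ tau]) (use g0 crit in simp)
  have sT: "s + \<tau> = T" by (simp add: \<tau>_def)
  have mem: "action U s \<gamma> \<in> {action U T \<gamma> | \<gamma>. admissible U T \<gamma> \<and> \<gamma> 0 = x0 \<and> (\<exists>m::int. \<gamma> T = y + of_int m)}"
    using W tau s0 g0 gs unfolding sT
    by (intro CollectI exI[of _ "\<lambda>t. \<gamma> (max (t - \<tau>) 0)"]) (auto simp: \<tau>_def)
  have bdd: "bdd_below {action U T \<gamma> | \<gamma>. admissible U T \<gamma> \<and> \<gamma> 0 = x0 \<and> (\<exists>m::int. \<gamma> T = y + of_int m)}"
    by (rule bdd_belowI[of _ 0]) (auto intro: action_nonneg)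
  show ?thesis unfolding circ_min_action_def by (rule cInf_lower[OF mem bdd])
qed

lemma peierls_le:
  assumes adm: "admissible U s \<gamma>" and g0: "\<gamma> 0 = x0" and crit: "deriv U x0 = 0"
    and gs: "\<gamma> s = y + of_int m"
  shows "peierls U y x0 \<le> ereal (action U s \<gamma>)"
proof -
  have ev: "eventually (\<lambda>T. ereal (circ_min_action U T y x0) \<le> ereal (action U s \<gamma>)) at_top"
    using eventually_ge_at_top[of s] by (rule eventually_mono) (simp add: circ_le[OF adm g0 crit gs])
  have "Liminf at_top (\<lambda>T. ereal (circ_min_action U T y x0)) \<le> Liminf at_top (\<lambda>T::real. ereal (action U s \<gamma>))"
    using ev by (rule Liminf_mono)
  then have "peierls U y x0 \<le> Liminf at_top (\<lambda>T::real. ereal (action U s \<gamma>))"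
    unfolding peierls_def .
  also have "\<dots> = ereal (action U s \<gamma>)" by (simp add: Liminf_const)
  finally show ?thesis .
qed

lemma line_mem:
  assumes "admissible U T \<gamma>" "\<gamma> 0 = x" "\<gamma> T = y"
  shows "action U T \<gamma> \<in> {action U T \<gamma> | T \<gamma>. admissible U T \<gamma> \<and> \<gamma> 0 = x \<and> \<gamma> T = y}"
  apply (rule CollectI)
  apply (rule exI[of _ T])
  apply (rule exI[of _ \<gamma>])
  using assms by simp

lemma line_lower:
  assumes "admissible U T \<gamma>" "\<gamma> 0 = x" "\<gamma> T = y"
  shows "line_barrier U y x \<le> action U T \<gamma>"
proof -
  have mem: "action U T \<gamma> \<in> {action U T \<gamma> | T \<gamma>. admissible U T \<gamma> \<and> \<gamma> 0 = x \<and> \<gamma> T = y}"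
    by (rule line_mem[OF assms])
  have bdd: "bdd_below {action U T \<gamma> | T \<gamma>. admissible U T \<gamma> \<and> \<gamma> 0 = x \<and> \<gamma> T = y}"
    by (rule bdd_belowI[of _ 0]) (auto intro: action_nonneg)
  show ?thesis unfolding line_barrier_def by (rule cInf_lower[OF mem bdd])
qed

context
  fixes U :: "real \<Rightarrow> real" and k :: nat and xm xM :: "int \<Rightarrow> real"
  assumes S: "skew_periodic_setting U k xm xM"
begin

lemma line_approx:
  assumes e: "e > 0"
  shows "\<exists>T \<gamma>. admissible U T \<gamma> \<and> \<gamma> 0 = x \<and> \<gamma> T = y \<and> action U T \<gamma> < line_barrier U y x + e"
proof -
  let ?A = "{action U T \<gamma> | T \<gamma>. admissible U T \<gamma> \<and> \<gamma> 0 = x \<and> \<gamma> T = y}"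
  have "admissible U 1 (\<lambda>t. x + ((y - x) / 1) * t)"
    by (rule adm_linear[OF S]) simp
  then have "action U 1 (\<lambda>t. x + ((y - x) / 1) * t) \<in> ?A" by (rule line_mem) simp_all
  then have ne: "?A \<noteq> {}" by blast
  have "Inf ?A < line_barrier U y x + e" unfolding line_barrier_def using e by simp
  from cInf_lessD[OF ne this] show ?thesis by blast
qed

lemma peierls_le_line:
  assumes crit: "deriv U x0 = 0" and x1: "x1 = x0 + of_int n"
  shows "peierls U y x0 \<le> ereal (line_barrier U y x1)"
proof (rule ereal_le_epsilon2)
  fix e :: real assume e: "e > 0"
  obtain T \<gamma> where g: "admissible U T \<gamma>" "\<gamma> 0 = x1" "\<gamma> T = y" "action U T \<gamma> < line_barrier U y x1 + e"
    using line_approx[OF e] by blast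
  have V: "admissible U T (\<lambda>t. \<gamma> t + of_int (- n)) \<and> action U T (\<lambda>t. \<gamma> t + of_int (- n)) = action U T \<gamma>"
    by (rule adm_vshift[OF S g(1)])
  have V1: "admissible U T (\<lambda>t. \<gamma> t + of_int (- n))" using V by (rule conjunct1)
  have V2: "action U T (\<lambda>t. \<gamma> t + of_int (- n)) = action U T \<gamma>" using V by (rule conjunct2)
  have q0: "(\<lambda>t. \<gamma> t + of_int (- n)) 0 = x0" using g(2) x1 by simp
  have qT: "(\<lambda>t. \<gamma> t + of_int (- n)) T = y + of_int (- n)" using g(3) by simp
  have "peierls U y x0 \<le> ereal (action U T (\<lambda>t. \<gamma> t + of_int (- n)))"
    by (rule peierls_le[OF V1 q0 crit qT])
  also have "\<dots> \<le> ereal (line_barrier U y x1) + ereal e" using V2 g(4) by simp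
  finally show "peierls U y x0 \<le> ereal (line_barrier U y x1) + ereal e" .
qed

lemma peierls_lower:
  assumes H: "\<And>T \<gamma> m. T \<ge> 1 \<Longrightarrow> admissible U T \<gamma> \<Longrightarrow> \<gamma> 0 = x \<Longrightarrow> \<gamma> T = y + of_int m \<Longrightarrow> c \<le> action U T \<gamma>"
  shows "ereal c \<le> peierls U y x"
proof -
  have cT: "c \<le> circ_min_action U T y x" if T: "T \<ge> 1" for T
  proof -
    let ?A = "{action U T \<gamma> | \<gamma>. admissible U T \<gamma> \<and> \<gamma> 0 = x \<and> (\<exists>m::int. \<gamma> T = y + of_int m)}"
    have a1: "admissible U T (\<lambda>t. x + ((y - x) / T) * t)"
      by (rule adm_linear[OF S]) (use T in simp)
    have a2: "x + ((y - x) / T) * T = y + of_int 0" using T by simp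
    have "action U T (\<lambda>t. x + ((y - x) / T) * t) \<in> ?A" by (rule circ_mem[OF a1 _ a2]) simp
    then have ne: "?A \<noteq> {}" by blast
    show ?thesis unfolding circ_min_action_def
    proof (rule cInf_greatest[OF ne])
      fix u assume "u \<in> ?A"
      then obtain \<gamma> m where u: "u = action U T \<gamma>" "admissible U T \<gamma>" "\<gamma> 0 = x" "\<gamma> T = y + of_int m"
        by blast
      show "c \<le> u" unfolding u(1) by (rule H[OF T u(2,3,4)])
    qed
  qed
  have ev: "eventually (\<lambda>T. ereal c \<le> ereal (circ_min_action U T y x)) at_top"
    using eventually_ge_at_top[of 1] by (rule eventually_mono) (simp add: cT)
  have "Liminf at_top (\<lambda>T::real. ereal c) \<le> Liminf at_top (\<lambda>T. ereal (circ_min_action U T y x))"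
    using ev by (rule Liminf_mono)
  then have "Liminf at_top (\<lambda>T::real. ereal c) \<le> peierls U y x"
    unfolding peierls_def .
  then show ?thesis by (simp add: Liminf_const)
qed

lemma piece:
  assumes adm: "admissible U T \<gamma>" and s: "0 \<le> s" "s \<le> T"
    and g0: "\<gamma> 0 = x0" and crit: "deriv U x0 = 0"
    and gs1: "\<gamma> s = y0 + of_int n" and gs2: "\<gamma> s = z + of_int m" and gT: "\<gamma> T = x + of_int m"
  shows "\<exists>A1 A2. peierls U y0 x0 \<le> ereal A1 \<and> line_barrier U x z \<le> A2 \<and> A1 + A2 = action U T \<gamma>"
proof -
  note Sp = adm_split[OF adm s]
  have Sp1: "admissible U s \<gamma>" using Sp by (rule conjunct1)
  have Sp2: "admissible U (T - s) (\<lambda>t. \<gamma> (t + s))" using Sp by (elim conjE)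
  have Sp3: "action U T \<gamma> = action U s \<gamma> + action U (T - s) (\<lambda>t. \<gamma> (t + s))" using Sp by (elim conjE)
  have l1: "peierls U y0 x0 \<le> ereal (action U s \<gamma>)"
    by (rule peierls_le[OF Sp1 g0 crit gs1])
  have V: "admissible U (T - s) (\<lambda>t. \<gamma> (t + s) + of_int (- m)) \<and>
      action U (T - s) (\<lambda>t. \<gamma> (t + s) + of_int (- m)) = action U (T - s) (\<lambda>t. \<gamma> (t + s))"
    by (rule adm_vshift[OF S Sp2])
  have V1: "admissible U (T - s) (\<lambda>t. \<gamma> (t + s) + of_int (- m))" using V by (rule conjunct1)
  have V2: "action U (T - s) (\<lambda>t. \<gamma> (t + s) + of_int (- m)) = action U (T - s) (\<lambda>t. \<gamma> (t + s))"
    using V by (rule conjunct2)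
  have e1: "\<gamma> (0 + s) + of_int (- m) = z" using gs2 by simp
  have e2: "\<gamma> (T - s + s) + of_int (- m) = x" using gT by simp
  have l2: "line_barrier U x z \<le> action U (T - s) (\<lambda>t. \<gamma> (t + s) + of_int (- m))"
    by (rule line_lower[OF V1]) (use e1 e2 in simp_all)
  show ?thesis
    by (rule exI[of _ "action U s \<gamma>"], rule exI[of _ "action U (T - s) (\<lambda>t. \<gamma> (t + s))"])
       (use l1 l2 V2 Sp3 in simp)
qed

end

theorem proposition3p4:
  fixes U :: "real \<Rightarrow> real" and k :: nat and xm xM :: "int \<Rightarrow> real"
    and Wv :: "int \<Rightarrow> real" and W :: "real \<Rightarrow> ereal"
  assumes setting: "skew_periodic_setting U k xm xM"
    and weak_kam: "\<forall>i\<in>{1..int k}.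
        ereal (Wv i) = (MIN j\<in>{1..int k}. ereal (Wv j) + peierls U (xm i) (xm j))"
    and W_def: "\<forall>x. W x = (MIN j\<in>{1..int k}. ereal (Wv j) + peierls U x (xm j))"
  shows "\<forall>i\<in>{1..int k}. \<forall>x\<in>{xm i..xm (i + 1)}.
           W x = min (ereal (Wv i + hR U x (xm i)))
                     (ereal (Wv (if i = int k then 1 else i + 1) + hL U x (xm (i + 1))))"
proof (intro ballI)
  note S = setting
  fix i x assume i: "i \<in> {1..int k}" and x: "x \<in> {xm i..xm (i + 1)}"
  define i' where "i' = (if i = int k then 1 else i + 1)"
  define e where "e = (if i = int k then (1::int) else 0)"
  have k1: "k \<ge> 1" by (rule SP1[OF S])
  have i'r: "i' \<in> {1..int k}" using i k1 by (auto simp: i'_def)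
  have xe: "xm (i + 1) = xm i' + of_int e"
  proof (cases "i = int k")
    case True
    then have "xm (i + 1) = xm (1 + int k)" by (simp add: add.commute)
    also have "\<dots> = xm 1 + 1" by (rule xm_k[OF S])
    finally show ?thesis using True by (simp add: i'_def e_def)
  qed (simp add: i'_def e_def)
  have fin: "finite {1..int k}" by simp
  have ne: "{1..int k} \<noteq> {}" using k1 by simp
  have kam: "ereal (Wv a) \<le> ereal (Wv j) + peierls U (xm a) (xm j)"
    if a: "a \<in> {1..int k}" and j: "j \<in> {1..int k}" for a j
  proof -
    have "ereal (Wv a) = (MIN j\<in>{1..int k}. ereal (Wv j) + peierls U (xm a) (xm j))"
      using weak_kam a by blast
    also have "\<dots> \<le> ereal (Wv j) + peierls U (xm a) (xm j)"
      by (rule Min_le) (use j in auto)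
    finally show ?thesis .
  qed
  have kam': "Wv a \<le> Wv j + A"
    if a: "a \<in> {1..int k}" and j: "j \<in> {1..int k}" and p: "peierls U (xm a) (xm j) \<le> ereal A" for a j A
  proof -
    have "ereal (Wv j) + peierls U (xm a) (xm j) \<le> ereal (Wv j) + ereal A"
      using p by (rule add_left_mono)
    with kam[OF a j] have "ereal (Wv a) \<le> ereal (Wv j) + ereal A" by (rule order_trans)
    then show ?thesis by simp
  qed
  have Wle: "W x \<le> ereal (Wv j) + peierls U x (xm j)" if j: "j \<in> {1..int k}" for j
    unfolding W_def[rule_format] by (rule Min_le) (use j in auto)
  have u1: "W x \<le> ereal (Wv i + hR U x (xm i))"
  proof -
    have "peierls U x (xm i) \<le> ereal (hR U x (xm i))"
      by (rule peierls_le_line[OF S xm_crit[OF S, of i], where n = 0]) simp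
    then have "ereal (Wv i) + peierls U x (xm i) \<le> ereal (Wv i) + ereal (hR U x (xm i))"
      by (rule add_left_mono)
    with Wle[OF i] have "W x \<le> ereal (Wv i) + ereal (hR U x (xm i))" by (rule order_trans)
    then show ?thesis by simp
  qed
  have u2: "W x \<le> ereal (Wv i' + hL U x (xm (i + 1)))"
  proof -
    have "peierls U x (xm i') \<le> ereal (hL U x (xm (i + 1)))"
      by (rule peierls_le_line[OF S xm_crit[OF S, of i'], where n = e]) (use xe in simp)
    then have "ereal (Wv i') + peierls U x (xm i') \<le> ereal (Wv i') + ereal (hL U x (xm (i + 1)))"
      by (rule add_left_mono)
    with Wle[OF i'r] have "W x \<le> ereal (Wv i') + ereal (hL U x (xm (i + 1)))" by (rule order_trans)
    then show ?thesis by simp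
  qed
  define c where "c = min (Wv i + hR U x (xm i)) (Wv i' + hL U x (xm (i + 1)))"
  have low: "ereal c \<le> ereal (Wv j) + peierls U x (xm j)" if j: "j \<in> {1..int k}" for j
  proof -
    have "ereal (c - Wv j) \<le> peierls U x (xm j)"
    proof (rule peierls_lower[OF S])
      fix T \<gamma> m assume T: "T \<ge> 1" and adm: "admissible U T \<gamma>" and g0: "\<gamma> 0 = xm j"
        and gT: "\<gamma> T = x + of_int m"
      have cont: "continuous_on {0..T} \<gamma>"
        using adm ac_cont unfolding admissible_def by blast
      define a where "a = xm i + of_int m"
      define b where "b = xm (i + 1) + of_int m"
      have aT: "a \<le> \<gamma> T" "\<gamma> T \<le> b" using x gT by (auto simp: a_def b_def)
      have crit: "deriv U (xm j) = 0" by (rule xm_crit[OF S])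
      have "(\<exists>s. 0 \<le> s \<and> s \<le> T \<and> \<gamma> s = a) \<or> (\<exists>s. 0 \<le> s \<and> s \<le> T \<and> \<gamma> s = b)"
      proof (cases "\<gamma> 0 \<le> a")
        case True
        then show ?thesis using IVT'[of \<gamma> 0 a T, OF True aT(1) _ cont] T by auto
      next
        case F1: False
        show ?thesis
        proof (cases "\<gamma> 0 \<ge> b")
          case True
          then show ?thesis using IVT2'[of \<gamma> T b 0, OF aT(2) True _ cont] T by auto
        next
          case False
          define q where "q = j + (- m) * int k"
          have xq: "xm q = xm j + of_int (- m)" unfolding q_def by (rule xm_per[OF S])
          have lo: "xm i < xm q" "xm q < xm (i + 1)"
            using F1 False g0 xq by (auto simp: a_def b_def)
          have "\<not> q \<le> i"
          proof
            assume "q \<le> i"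
            then have "xm q \<le> xm i" using xm_mono[OF S, of q i] by (cases "q = i") auto
            then show False using lo by simp
          qed
          moreover have "\<not> i + 1 \<le> q"
          proof
            assume "i + 1 \<le> q"
            then have "xm (i + 1) \<le> xm q" using xm_mono[OF S, of "i + 1" q] by (cases "q = i + 1") auto
            then show False using lo by simp
          qed
          ultimately show ?thesis by simp
        qed
      qed
      then show "c - Wv j \<le> action U T \<gamma>"
      proof
        assume "\<exists>s. 0 \<le> s \<and> s \<le> T \<and> \<gamma> s = a"
        then obtain s where s: "0 \<le> s" "s \<le> T" "\<gamma> s = a" by blast
        have sa: "\<gamma> s = xm i + of_int m" using s(3) by (simp add: a_def)
        obtain A1 A2 where A: "peierls U (xm i) (xm j) \<le> ereal A1" "hR U x (xm i) \<le> A2"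
          "A1 + A2 = action U T \<gamma>"
          using piece[OF S adm s(1,2) g0 crit sa sa gT] by blast
        have "Wv i \<le> Wv j + A1" by (rule kam'[OF i j A(1)])
        then show ?thesis using A unfolding c_def by linarith
      next
        assume "\<exists>s. 0 \<le> s \<and> s \<le> T \<and> \<gamma> s = b"
        then obtain s where s: "0 \<le> s" "s \<le> T" "\<gamma> s = b" by blast
        have gs1: "\<gamma> s = xm i' + of_int (e + m)" using s(3) xe by (simp add: b_def)
        have gs2: "\<gamma> s = xm (i + 1) + of_int m" using s(3) by (simp add: b_def)
        obtain A1 A2 where A: "peierls U (xm i') (xm j) \<le> ereal A1" "hL U x (xm (i + 1)) \<le> A2"
          "A1 + A2 = action U T \<gamma>"
          using piece[OF S adm s(1,2) g0 crit gs1 gs2 gT] by blast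
        have "Wv i' \<le> Wv j + A1" by (rule kam'[OF i'r j A(1)])
        then show ?thesis using A unfolding c_def by linarith
      qed
    qed
    then have "ereal (Wv j) + ereal (c - Wv j) \<le> ereal (Wv j) + peierls U x (xm j)"
      by (rule add_left_mono)
    then show ?thesis by simp
  qed
  have l: "ereal c \<le> W x"
    unfolding W_def[rule_format] by (rule Min.boundedI) (use fin ne low in auto)
  have mm: "min (ereal (Wv i + hR U x (xm i))) (ereal (Wv i' + hL U x (xm (i + 1)))) = ereal c"
    unfolding c_def by (simp add: min_def)
  have "W x \<le> min (ereal (Wv i + hR U x (xm i))) (ereal (Wv i' + hL U x (xm (i + 1))))"
    by (rule min.boundedI[OF u1 u2])
  then have "W x \<le> ereal c" unfolding mm .
  then have "W x = ereal c" using l by (rule antisym)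
  then show "W x = min (ereal (Wv i + hR U x (xm i)))
                     (ereal (Wv (if i = int k then 1 else i + 1) + hL U x (xm (i + 1))))"
    unfolding i'_def[symmetric] mm .
qed

end
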